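(* In the multidimensional knapsack problem, let $x^*$ be a basic optimal solution of the LP relaxation with value $V^*=\sum_iv_ix_i^*$, and let $q_{\max}:=\max_{i,j}w_{ij}/B_j$, assumed positive. If $k$ is an item with $0<x_k^*<1$, then $v_k\le q_{\max}V^*$.
   Context: Multidimensional knapsack: a finite set of items $i$, each with value $v_i\ge0$ and weight vector $(w_{i1},\dots,w_{im})\in\mathbb{R}_+^m$, and capacities $B_1,\dots,B_m>0$. The LP relaxation maximizes $\sum_iv_ix_i$ subject to $0\le x_i\le1$ for all $i$ and $\sum_iw_{ij}x_i\le B_j$ for all $j$. *)

theory Defs
  imports Complex_Main
begin

text \<open>Solutions of the LP relaxation are
functions x :: 'i \<Rightarrow> real; only their values on I matter.\<close>

definition lp_feasible ::
  "'i set \<Rightarrow> 'j set \<Rightarrow> ('i \<Rightarrow> 'j \<Rightarrow> real) \<Rightarrow> ('j \<Rightarrow> real) \<Rightarrow> ('i \<Rightarrow> real) \<Rightarrow> bool" where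
  "lp_feasible I J w B x \<longleftrightarrow>
     (\<forall>i\<in>I. 0 \<le> x i \<and> x i \<le> 1) \<and> (\<forall>j\<in>J. (\<Sum>i\<in>I. w i j * x i) \<le> B j)"

definition lp_optimal ::
  "'i set \<Rightarrow> 'j set \<Rightarrow> ('i \<Rightarrow> real) \<Rightarrow> ('i \<Rightarrow> 'j \<Rightarrow> real) \<Rightarrow> ('j \<Rightarrow> real) \<Rightarrow> ('i \<Rightarrow> real) \<Rightarrow> bool" where
  "lp_optimal I J v w B x \<longleftrightarrow> lp_feasible I J w B x \<and>
     (\<forall>y. lp_feasible I J w B y \<longrightarrow> (\<Sum>i\<in>I. v i * y i) \<le> (\<Sum>i\<in>I. v i * x i))"

text \<open>Basic solution = vertex (extreme point) of the feasible polytope,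
with coordinates restricted to I.\<close>
definition lp_basic ::
  "'i set \<Rightarrow> 'j set \<Rightarrow> ('i \<Rightarrow> 'j \<Rightarrow> real) \<Rightarrow> ('j \<Rightarrow> real) \<Rightarrow> ('i \<Rightarrow> real) \<Rightarrow> bool" where
  "lp_basic I J w B x \<longleftrightarrow> lp_feasible I J w B x \<and>
     (\<forall>y z t. lp_feasible I J w B y \<and> lp_feasible I J w B z \<and> 0 < t \<and> t < 1 \<and>
        (\<forall>i\<in>I. x i = t * y i + (1 - t) * z i) \<longrightarrow> (\<forall>i\<in>I. y i = x i \<and> z i = x i))"

end

theory Submission
  imports Defs
begin

theorem lemma5:
  fixes I :: "'i set" and J :: "'j set"
    and v :: "'i \<Rightarrow> real" and w :: "'i \<Rightarrow> 'j \<Rightarrow> real" and B :: "'j \<Rightarrow> real"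
    and x :: "'i \<Rightarrow> real" and k :: 'i
  assumes "finite I" and "finite J" and "I \<noteq> {}" and "J \<noteq> {}"
    and "\<forall>i\<in>I. v i \<ge> 0"
    and "\<forall>i\<in>I. \<forall>j\<in>J. w i j \<ge> 0"
    and "\<forall>j\<in>J. B j > 0"
    and "lp_basic I J w B x" and "lp_optimal I J v w B x"
    and "Max {w i j / B j | i j. i \<in> I \<and> j \<in> J} > 0"
    and "k \<in> I" and "0 < x k" and "x k < 1"
  shows "v k \<le> Max {w i j / B j | i j. i \<in> I \<and> j \<in> J} * (\<Sum>i\<in>I. v i * x i)"
proof -
  define q where "q = Max {w i j / B j | i j. i \<in> I \<and> j \<in> J}"
  have qpos: "q > 0" using assms(10) q_def by simp
  have fin: "finite {w i j / B j | i j. i \<in> I \<and> j \<in> J}"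
  proof -
    have "{w i j / B j | i j. i \<in> I \<and> j \<in> J} = (\<lambda>(i,j). w i j / B j) ` (I \<times> J)" by auto
    then show ?thesis using assms(1,2) by simp
  qed
  have wk: "w k j \<le> q * B j" if "j \<in> J" for j
  proof -
    have "w k j / B j \<le> q" unfolding q_def using fin that assms(11) by (intro Max_ge) auto
    then show ?thesis using assms(7) that by (simp add: divide_le_eq)
  qed
  define e where "e = min (1 - x k) (1/q)"
  define d where "d = e * q"
  have epos: "e > 0" using assms(13) qpos e_def by simp
  have e1: "e \<le> 1 - x k" "e \<le> 1/q" using e_def by auto
  have d01: "0 \<le> d" "d \<le> 1" using epos qpos e1(2) d_def by (auto simp: field_simps)
  define y where "y i = (1-d) * x i + (if i = k then e else 0)" for i
  have xf: "lp_feasible I J w B x" using assms(9) lp_optimal_def by blast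
  have sumy: "(\<Sum>i\<in>I. f i * y i) = (1-d) * (\<Sum>i\<in>I. f i * x i) + e * f k" for f
  proof -
    have "(\<Sum>i\<in>I. f i * y i) = (\<Sum>i\<in>I. (1-d) * (f i * x i) + (if i = k then e * f k else 0))"
      unfolding y_def by (intro sum.cong) (auto simp: algebra_simps)
    also have "\<dots> = (1-d) * (\<Sum>i\<in>I. f i * x i) + e * f k"
      using assms(1,11) by (simp add: sum.distrib sum_distrib_left)
    finally show ?thesis .
  qed
  have yf: "lp_feasible I J w B y"
    unfolding lp_feasible_def
  proof (intro conjI ballI)
    fix i assume i: "i \<in> I"
    have xi: "0 \<le> x i" "x i \<le> 1" using xf i unfolding lp_feasible_def by auto
    have "0 \<le> (1-d) * x i" using d01 xi by simp
    then show "0 \<le> y i" using epos y_def by simp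
    have "(1-d) * x i \<le> x i" using d01 xi by (simp add: mult_left_le_one_le)
    moreover have "(1-d) * x i \<le> 1" using d01 xi by (simp add: mult_le_one)
    ultimately show "y i \<le> 1" using e1 y_def by auto
  next
    fix j assume j: "j \<in> J"
    have S: "(\<Sum>i\<in>I. w i j * x i) \<le> B j" using xf j unfolding lp_feasible_def by auto
    have "(\<Sum>i\<in>I. w i j * y i) = (1-d) * (\<Sum>i\<in>I. w i j * x i) + e * w k j"
      by (rule sumy)
    also have "\<dots> \<le> (1-d) * B j + e * (q * B j)"
      using S wk[OF j] d01 epos by (intro add_mono mult_left_mono) auto
    also have "\<dots> = B j" using d_def by (simp add: algebra_simps)
    finally show "(\<Sum>i\<in>I. w i j * y i) \<le> B j" .
  qed
  have "(\<Sum>i\<in>I. v i * y i) \<le> (\<Sum>i\<in>I. v i * x i)"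
    using assms(9) yf lp_optimal_def by blast
  then have "e * v k \<le> e * (q * (\<Sum>i\<in>I. v i * x i))"
    using sumy[of v] d_def by (simp add: algebra_simps)
  then have "v k \<le> q * (\<Sum>i\<in>I. v i * x i)" using epos by simp
  then show ?thesis using q_def by simp
qed

end
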